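(* Let $Q(z)=\Gamma_0^+(A-z)^{-1}\Gamma_0\in N_\kappa(H)$ with $A$ a bounded self-adjoint operator in a Pontryagin space $K$, $\Gamma_0:H\to K$ bounded and $\Gamma_0^+\Gamma_0$ boundedly invertible; let $P:=\Gamma_0(\Gamma_0^+\Gamma_0)^{-1}\Gamma_0^+$ and $\tilde A:=(I-P)A(I-P)$ in $(I-P)K$. Let $z_0\in\rho(A)\cap\rho(\tilde A)\cap\mathbb{C}^+$, $\Gamma:=(A-z_0)^{-1}\Gamma_0$, $\hat\Gamma:=-\Gamma Q(z_0)^{-1}$, and let $\hat A$ be the linear relation in $K$ defined by $$(\hat A-z_0)^{-1}=(A-z_0)^{-1}-(A-z_0)^{-1}\Gamma_0Q(z_0)^{-1}\Gamma_0^+(A-z_0)^{-1}.$$ Then $\hat A$ is a self-adjoint linear relation, the function $\hat Q(z):=-Q(z)^{-1}$ admits the representation $$\hat Q(z)=-Q(\bar z_0)^{-1}+(z-\bar z_0)\hat\Gamma^+\big(I+(z-z_0)(\hat A-z)^{-1}\big)\hat\Gamma ,$$ and the multivalued part of $\hat A$ satisfies $$\hat A(0):=\{y:\{0,y\}\in\hat A\}=\ker(\hat A-z_0)^{-1}=R(P)=R(\Gamma_0).$$ In particular, if $H\neq\{0\}$ then $\hat A$ is not an operator (it has a critical eigenvalue at $\infty$).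
   Context: $H$ is a Hilbert space; $(K,[\cdot,\cdot])$ a Pontryagin space; for bounded $\Gamma_0:H\to K$, $\Gamma_0^+$ is defined by $(h,\Gamma_0^+k)=[\Gamma_0h,k]$. $N_\kappa(H)$ denotes generalized Nevanlinna functions with $\kappa$ negative squares. A linear relation is a linear subspace of $K\times K$; $R(\cdot)$ denotes range. Note that $Q(z)=Q(z_0)^*+(z-\bar z_0)\Gamma^+(I+(z-z_0)(A-z)^{-1})\Gamma$ with $\Gamma=(A-z_0)^{-1}\Gamma_0$. *)

theory Defs
  imports Complex_Main
begin

class cvec = ab_group_add +
  fixes cscale :: "complex \<Rightarrow> 'a \<Rightarrow> 'a"  (infixr "*\<^sub>C" 75)
  assumes cscale_add_right: "a *\<^sub>C (x + y) = a *\<^sub>C x + a *\<^sub>C y"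
    and cscale_add_left: "(a + b) *\<^sub>C x = a *\<^sub>C x + b *\<^sub>C x"
    and cscale_mult: "a *\<^sub>C (b *\<^sub>C x) = (a * b) *\<^sub>C x"
    and cscale_one: "1 *\<^sub>C x = x"

class chilbert = cvec +
  fixes cinner :: "'a \<Rightarrow> 'a \<Rightarrow> complex"
  assumes cinner_add_left: "cinner (x + y) z = cinner x z + cinner y z"
    and cinner_scale_left: "cinner (a *\<^sub>C x) y = a * cinner x y"
    and cinner_commute: "cinner y x = cnj (cinner x y)"
    and cinner_pos: "x \<noteq> 0 \<Longrightarrow> 0 < Re (cinner x x)"
    and cinner_complete:
      "(\<forall>e>0. \<exists>N::nat. \<forall>m\<ge>N. \<forall>n\<ge>N. sqrt (Re (cinner (X m - X n) (X m - X n))) < e)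
       \<Longrightarrow> (\<exists>L. \<forall>e>0. \<exists>N::nat. \<forall>n\<ge>N. sqrt (Re (cinner (X n - L) (X n - L))) < e)"

definition hnorm :: "'a::chilbert \<Rightarrow> real" where
  "hnorm x = sqrt (Re (cinner x x))"

definition clinear :: "('a::cvec \<Rightarrow> 'b::cvec) \<Rightarrow> bool" where
  "clinear f \<longleftrightarrow> (\<forall>x y. f (x + y) = f x + f y) \<and> (\<forall>c x. f (c *\<^sub>C x) = c *\<^sub>C f x)"

definition bop :: "('a::chilbert \<Rightarrow> 'b::chilbert) \<Rightarrow> bool" where
  "bop f \<longleftrightarrow> clinear f \<and> (\<exists>C. \<forall>x. hnorm (f x) \<le> C * hnorm x)"

definition binvertible :: "('a::chilbert \<Rightarrow> 'b::chilbert) \<Rightarrow> bool" where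
  "binvertible T \<longleftrightarrow> (\<exists>B. bop B \<and> (\<forall>x. B (T x) = x) \<and> (\<forall>y. T (B y) = y))"

definition finite_cdim :: "'a::cvec set \<Rightarrow> bool" where
  "finite_cdim V \<longleftrightarrow> (\<exists>S. finite S \<and> V \<subseteq> {\<Sum>x\<in>S. c x *\<^sub>C x | c. True})"

text \<open>A Pontryagin space is represented as a Hilbert space (K,(.,.)) together with a fundamental
  symmetry J (bounded, J^2 = I, J self-adjoint) whose negative part ker(J+I) is finite dimensional;
  the indefinite inner product is [x,y] = (Jx,y).\<close>
definition pontryagin :: "('k::chilbert \<Rightarrow> 'k) \<Rightarrow> bool" where
  "pontryagin J \<longleftrightarrow> bop J \<and> (\<forall>x. J (J x) = x) \<and> (\<forall>x y. cinner (J x) y = cinner x (J y))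
     \<and> finite_cdim {x. J x = - x}"

definition kinner :: "('k::chilbert \<Rightarrow> 'k) \<Rightarrow> 'k \<Rightarrow> 'k \<Rightarrow> complex" where
  "kinner J x y = cinner (J x) y"

definition padj :: "('k::chilbert \<Rightarrow> 'k) \<Rightarrow> ('h::chilbert \<Rightarrow> 'k) \<Rightarrow> ('k \<Rightarrow> 'h)" where
  "padj J G = (THE B. \<forall>h k. cinner h (B k) = kinner J (G h) k)"

definition cres :: "('a::chilbert \<Rightarrow> 'a) \<Rightarrow> complex set" where
  "cres A = {z. binvertible (\<lambda>x. A x - z *\<^sub>C x)}"

definition cresolvent :: "('a::chilbert \<Rightarrow> 'a) \<Rightarrow> complex \<Rightarrow> 'a \<Rightarrow> 'a" where
  "cresolvent A z = inv (\<lambda>x. A x - z *\<^sub>C x)"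

definition res_on :: "'a::chilbert set \<Rightarrow> ('a \<Rightarrow> 'a) \<Rightarrow> complex set" where
  "res_on S T = {z. bij_betw (\<lambda>x. T x - z *\<^sub>C x) S S \<and>
      (\<exists>C. \<forall>y\<in>S. hnorm (inv_into S (\<lambda>x. T x - z *\<^sub>C x) y) \<le> C * hnorm y)}"

definition linrel :: "('a::cvec \<times> 'a) set \<Rightarrow> bool" where
  "linrel T \<longleftrightarrow> (0, 0) \<in> T \<and>
     (\<forall>x y u v. (x, y) \<in> T \<longrightarrow> (u, v) \<in> T \<longrightarrow> (x + u, y + v) \<in> T) \<and>
     (\<forall>c x y. (x, y) \<in> T \<longrightarrow> (c *\<^sub>C x, c *\<^sub>C y) \<in> T)"

definition ograph :: "('a \<Rightarrow> 'a) \<Rightarrow> ('a \<times> 'a) set" where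
  "ograph f = {(x, f x) | x. True}"

definition rshift :: "('a::cvec \<times> 'a) set \<Rightarrow> complex \<Rightarrow> ('a \<times> 'a) set" where
  "rshift T z = {(x, y - z *\<^sub>C x) | x y. (x, y) \<in> T}"

definition rinv :: "('a \<times> 'a) set \<Rightarrow> ('a \<times> 'a) set" where
  "rinv T = {(y, x) | x y. (x, y) \<in> T}"

definition radj :: "('k::chilbert \<Rightarrow> 'k) \<Rightarrow> ('k \<times> 'k) set \<Rightarrow> ('k \<times> 'k) set" where
  "radj J T = {(h, k). \<forall>f g. (f, g) \<in> T \<longrightarrow> kinner J k f = kinner J h g}"

definition rres :: "('a::chilbert \<times> 'a) set \<Rightarrow> complex set" where
  "rres T = {z. \<exists>R. bop R \<and> rinv (rshift T z) = ograph R}"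

definition rresolvent :: "('a::chilbert \<times> 'a) set \<Rightarrow> complex \<Rightarrow> 'a \<Rightarrow> 'a" where
  "rresolvent T z = (THE R. rinv (rshift T z) = ograph R)"

definition mulpart :: "('a::zero \<times> 'a) set \<Rightarrow> 'a set" where
  "mulpart T = {y. (0, y) \<in> T}"

definition rker :: "('a::zero \<times> 'a) set \<Rightarrow> 'a set" where
  "rker T = {x. (x, 0) \<in> T}"

end

theory Submission
  imports Defs
begin



lemma cscale_zero_left[simp]: "(0::complex) *\<^sub>C (x::'a::cvec) = 0"
proof -
  have "(0::complex) *\<^sub>C x = (0 + 0) *\<^sub>C x" by simp
  also have "... = 0 *\<^sub>C x + 0 *\<^sub>C x" by (rule cscale_add_left)
  finally show ?thesis by simp
qed

lemma cscale_zero_right[simp]: "a *\<^sub>C (0::'a::cvec) = 0"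
proof -
  have "a *\<^sub>C (0::'a) = a *\<^sub>C (0 + 0)" by simp
  also have "... = a *\<^sub>C 0 + a *\<^sub>C 0" by (rule cscale_add_right)
  finally show ?thesis by simp
qed

lemma cscale_minus_left: "(- a) *\<^sub>C (x::'a::cvec) = - (a *\<^sub>C x)"
proof -
  have "(- a) *\<^sub>C x + a *\<^sub>C x = (-a + a) *\<^sub>C x" by (simp only: cscale_add_left)
  also have "... = 0" by simp
  finally show ?thesis by (simp add: eq_neg_iff_add_eq_0)
qed

lemma cscale_minus_right: "a *\<^sub>C (- x::'a::cvec) = - (a *\<^sub>C x)"
proof -
  have "a *\<^sub>C (- x) + a *\<^sub>C x = a *\<^sub>C (- x + x)" by (simp only: cscale_add_right)
  also have "... = 0" by simp
  finally show ?thesis by (simp add: eq_neg_iff_add_eq_0)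
qed

lemma cscale_diff_right: "a *\<^sub>C (x - y::'a::cvec) = a *\<^sub>C x - a *\<^sub>C y"
  by (simp only: diff_conv_add_uminus cscale_add_right cscale_minus_right)

lemma cscale_diff_left: "(a - b) *\<^sub>C (x::'a::cvec) = a *\<^sub>C x - b *\<^sub>C x"
  by (simp only: diff_conv_add_uminus cscale_add_left cscale_minus_left)

declare cscale_one[simp]

lemma cscale_minus_one[simp]: "(-1) *\<^sub>C (x::'a::cvec) = - x"
  by (simp add: cscale_minus_left)

lemma cinner_add_right: "cinner x (y + z) = cinner x y + cinner (x::'a::chilbert) z"
proof -
  have "cinner x (y + z) = cnj (cinner (y + z) x)" by (rule cinner_commute)
  also have "... = cnj (cinner y x) + cnj (cinner z x)" by (simp add: cinner_add_left)
  also have "... = cinner x y + cinner x z" by (simp flip: cinner_commute)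
  finally show ?thesis .
qed

lemma cinner_scale_right: "cinner x (a *\<^sub>C y) = cnj a * cinner (x::'a::chilbert) y"
proof -
  have "cinner x (a *\<^sub>C y) = cnj (cinner (a *\<^sub>C y) x)" by (rule cinner_commute)
  also have "... = cnj a * cnj (cinner y x)" by (simp add: cinner_scale_left)
  also have "... = cnj a * cinner x y" by (simp flip: cinner_commute)
  finally show ?thesis .
qed

lemma cinner_zero_left[simp]: "cinner 0 (y::'a::chilbert) = 0"
proof -
  have "cinner 0 y = cinner ((0::complex) *\<^sub>C (0::'a)) y" by simp
  also have "... = 0" by (simp only: cinner_scale_left) simp
  finally show ?thesis .
qed

lemma cinner_zero_right[simp]: "cinner (y::'a::chilbert) 0 = 0"
  by (subst cinner_commute) simp

lemma cinner_minus_left: "cinner (- x) (y::'a::chilbert) = - cinner x y"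
proof -
  have "cinner (- x) y = cinner ((-1) *\<^sub>C x) y" by simp
  also have "... = - cinner x y" by (simp only: cinner_scale_left) simp
  finally show ?thesis .
qed

lemma cinner_minus_right: "cinner x (- y::'a::chilbert) = - cinner x y"
  by (subst cinner_commute) (simp add: cinner_minus_left flip: cinner_commute)

lemma cinner_diff_left: "cinner (x - z) (y::'a::chilbert) = cinner x y - cinner z y"
  by (simp only: diff_conv_add_uminus cinner_add_left cinner_minus_left)

lemma cinner_diff_right: "cinner x (y - z::'a::chilbert) = cinner x y - cinner x z"
  by (simp only: diff_conv_add_uminus cinner_add_right cinner_minus_right)

lemmas cinner_simps = cinner_add_left cinner_add_right cinner_scale_left cinner_scale_right
  cinner_minus_left cinner_minus_right cinner_diff_left cinner_diff_right

lemma cinner_self_Im: "Im (cinner x (x::'a::chilbert)) = 0"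
proof -
  have "cinner x x = cnj (cinner x x)" by (rule cinner_commute)
  then have "Im (cinner x x) = - Im (cinner x x)" by (metis cnj.sel(2))
  then show ?thesis by simp
qed

lemma cinner_self_real: "cinner x (x::'a::chilbert) = complex_of_real (Re (cinner x x))"
  by (simp add: cinner_self_Im complex_eq_iff)

lemma cinner_self_nonneg: "0 \<le> Re (cinner x (x::'a::chilbert))"
  by (cases "x = 0") (auto dest: cinner_pos)

lemma cinner_self_eq0: "cinner x x = 0 \<longleftrightarrow> x = (0::'a::chilbert)"
proof
  assume "cinner x x = 0"
  then show "x = 0" using cinner_pos[of x] by (cases "x = 0") auto
qed simp

lemma cinner_ext: "(\<And>h. cinner h a = cinner h (b::'a::chilbert)) \<Longrightarrow> a = b"
proof -
  assume "\<And>h. cinner h a = cinner h b"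
  then have "cinner (a - b) (a - b) = 0" by (simp add: cinner_diff_right)
  then show "a = b" by (simp add: cinner_self_eq0)
qed




definition nsq :: "'a::chilbert \<Rightarrow> real" where "nsq x = Re (cinner x x)"

lemma nsq_nonneg: "0 \<le> nsq x" 
  unfolding nsq_def
  apply (rule cinner_self_nonneg)
  done

lemma hnorm_nsq: "hnorm x = sqrt (nsq x)" by (simp add: hnorm_def nsq_def)

lemma hnorm_nonneg: "0 \<le> hnorm x" by (simp add: hnorm_nsq nsq_nonneg)

lemma hnorm_sq: "(hnorm x)\<^sup>2 = nsq x" by (simp add: hnorm_nsq nsq_nonneg)

lemma cinner_self_nsq: "cinner x x = complex_of_real (nsq x)"
  unfolding nsq_def by (rule cinner_self_real)

lemma nsq_eq0: "nsq x = 0 \<longleftrightarrow> x = 0"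
  by (metis cinner_self_eq0 cinner_self_nsq of_real_eq_0_iff)

lemma hnorm_eq0: "hnorm x = 0 \<longleftrightarrow> x = 0"
  by (simp add: hnorm_nsq nsq_eq0)

lemma hnorm_zero[simp]: "hnorm 0 = 0" by (simp add: hnorm_eq0)

lemma cinner_expand: "cinner (x + t *\<^sub>C y) (x + t *\<^sub>C y) =
   cinner x x + cnj t * cinner x y + t * cinner y x + t * cnj t * cinner y y"
  by (simp add: cinner_add_left cinner_add_right cinner_scale_left cinner_scale_right algebra_simps)

lemma nsq_scale: "nsq (c *\<^sub>C x) = (cmod c)\<^sup>2 * nsq x"
proof -
  have "cinner (c *\<^sub>C x) (c *\<^sub>C x) = (c * cnj c) * cinner x x"
    by (simp add: cinner_scale_left cinner_scale_right)
  also have "... = complex_of_real ((cmod c)\<^sup>2 * nsq x)"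
    by (simp add: cinner_self_nsq flip: complex_norm_square)
  finally show ?thesis by (simp add: nsq_def)
qed

lemma hnorm_scale: "hnorm (c *\<^sub>C x) = cmod c * hnorm x"
  by (simp add: hnorm_nsq nsq_scale real_sqrt_mult)

lemma hnorm_minus: "hnorm (- x) = hnorm x"
  using hnorm_scale[of "-1" x] by simp

lemma hnorm_diff_commute: "hnorm (x - y) = hnorm (y - x)"
  by (metis hnorm_minus minus_diff_eq)

lemma cauchy_schwarz_sq: "(cmod (cinner x y))\<^sup>2 \<le> nsq x * nsq y"
proof (cases "y = 0")
  case True then show ?thesis by (simp add: nsq_def)
next
  case False
  define b where "b = nsq y"
  define a where "a = cinner x y"
  have b: "b > 0" using False nsq_nonneg nsq_eq0 b_def by (metis less_eq_real_def)
  define t where "t = - a / complex_of_real b"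
  have yx: "cinner y x = cnj a" by (simp add: a_def flip: cinner_commute)
  have "cinner (x + t *\<^sub>C y) (x + t *\<^sub>C y) = cinner x x + cnj t * a + t * cnj a + t * cnj t * complex_of_real b"
    by (subst cinner_expand) (simp add: a_def yx b_def cinner_self_nsq)
  also have "... = cinner x x - a * cnj a / complex_of_real b"
    using b by (simp add: t_def field_simps)
  also have "... = complex_of_real (nsq x - (cmod a)\<^sup>2 / b)"
    by (simp add: cinner_self_nsq flip: complex_norm_square)
  finally have "nsq (x + t *\<^sub>C y) = nsq x - (cmod a)\<^sup>2 / b" by (simp add: nsq_def)
  then have "0 \<le> nsq x - (cmod a)\<^sup>2 / b" using nsq_nonneg by metis
  then show ?thesis using b by (simp add: a_def b_def field_simps)
qed

lemma cauchy_schwarz: "cmod (cinner x y) \<le> hnorm x * hnorm y"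
proof -
  have "(cmod (cinner x y))\<^sup>2 \<le> (hnorm x * hnorm y)\<^sup>2"
    using cauchy_schwarz_sq by (simp add: power_mult_distrib hnorm_sq)
  then show ?thesis using hnorm_nonneg by (meson mult_nonneg_nonneg power2_le_imp_le)
qed

lemma nsq_add: "nsq (x + y) = nsq x + 2 * Re (cinner x y) + nsq y"
proof -
  have "cinner (x + y) (x + y) = cinner x x + cinner x y + cnj (cinner x y) + cinner y y"
    by (simp add: cinner_add_left cinner_add_right flip: cinner_commute)
  then show ?thesis by (simp add: nsq_def)
qed

lemma hnorm_triangle: "hnorm (x + y) \<le> hnorm x + hnorm y"
proof -
  have "Re (cinner x y) \<le> hnorm x * hnorm y"
    using cauchy_schwarz complex_Re_le_cmod order_trans by blast
  then have "nsq (x + y) \<le> (hnorm x + hnorm y)\<^sup>2"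
    by (simp add: nsq_add power2_sum hnorm_sq)
  then have "(hnorm (x + y))\<^sup>2 \<le> (hnorm x + hnorm y)\<^sup>2" by (simp add: hnorm_sq)
  then show ?thesis using hnorm_nonneg by (meson add_nonneg_nonneg power2_le_imp_le)
qed

lemma hnorm_triangle_diff: "hnorm (x - y) \<le> hnorm x + hnorm y"
  using hnorm_triangle[of x "- y"] by (simp add: hnorm_minus)

lemma parallelogram: "nsq (x - y) + nsq (x + y) = 2 * nsq x + 2 * nsq y"
proof -
  have "nsq (x - y) = nsq x - 2 * Re (cinner x y) + nsq y"
    using nsq_add[of x "- y"] by (simp add: cinner_minus_right nsq_def cinner_minus_left)
  then show ?thesis by (simp add: nsq_add)
qed




lemma riesz:
  fixes f :: "'a::chilbert \<Rightarrow> complex"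
  assumes add: "\<And>x y. f (x + y) = f x + f y" and sc: "\<And>c x. f (c *\<^sub>C x) = c * f x"
    and bd: "\<And>x. cmod (f x) \<le> C * hnorm x"
  shows "\<exists>w. \<forall>x. f x = cinner x w"
proof (cases "\<forall>x. f x = 0")
  case True then show ?thesis by (intro exI[of _ 0]) simp
next
  case False
  then obtain a where fa: "f a \<noteq> 0" by blast
  have f0: "f 0 = 0" using sc[of 0 0] by simp
  have fdiff: "f (x - y) = f x - f y" for x y
    using add[of "x - y" y] by simp
  have C0: "0 \<le> C"
  proof (rule ccontr)
    assume "\<not> 0 \<le> C"
    then have "C * hnorm a \<le> 0" using hnorm_nonneg[of a] by (simp add: mult_nonpos_nonneg)
    moreover have "0 < cmod (f a)" using fa by simp
    ultimately show False using bd[of a] by linarith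
  qed
  define S where "S = {x. f x = 1}"
  have a1: "(1 / f a) *\<^sub>C a \<in> S" by (simp add: S_def sc fa)
  define d where "d = Inf (hnorm ` S)"
  have bdd: "bdd_below (hnorm ` S)" by (rule bdd_belowI[of _ 0]) (auto simp: hnorm_nonneg)
  have ne: "hnorm ` S \<noteq> {}" using a1 by auto
  have d_le: "d \<le> hnorm x" if "x \<in> S" for x
    unfolding d_def by (rule cInf_lower) (use that bdd in auto)
  have d0: "0 \<le> d" unfolding d_def by (rule cInf_greatest[OF ne]) (auto simp: hnorm_nonneg)
  have approx: "\<exists>x. x \<in> S \<and> hnorm x < d + 1 / (real n + 1)" for n
  proof -
    have "Inf (hnorm ` S) < d + 1 / (real n + 1)" unfolding d_def[symmetric]
      by (simp add: add_pos_pos)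
    then obtain y where "y \<in> hnorm ` S" "y < d + 1 / (real n + 1)"
      using cInf_less_iff[OF ne bdd] by blast
    then show ?thesis by blast
  qed
  then have "\<forall>n. \<exists>x. x \<in> S \<and> hnorm x < d + 1 / (real n + 1)" by blast
  from choice[OF this] obtain X where X: "\<forall>n. X n \<in> S \<and> hnorm (X n) < d + 1 / (real n + 1)"
    by blast
  have XS: "X n \<in> S" for n using X by blast
  have mid: "nsq (x - y) \<le> 2 * nsq x + 2 * nsq y - 4 * d\<^sup>2" if "x \<in> S" "y \<in> S" for x y
  proof -
    define m where "m = (1/2 :: complex) *\<^sub>C (x + y)"
    have "f m = 1" using that by (simp add: m_def S_def sc add)
    then have "d \<le> hnorm m" using d_le S_def by blast
    then have "d\<^sup>2 \<le> nsq m" using d0 by (metis hnorm_sq power_mono)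
    moreover have "x + y = (2::complex) *\<^sub>C m" by (simp add: m_def cscale_mult)
    then have "nsq (x + y) = 4 * nsq m" by (simp add: nsq_scale)
    ultimately show ?thesis using parallelogram[of x y] by linarith
  qed
  have cauchy_est: "nsq (X m - X n) \<le> 4 * (1 / (real N + 1)) * (2 * d + 1)"
    if "m \<ge> N" "n \<ge> N" for m n N
  proof -
    define e where "e = 1 / (real N + 1)"
    have e0: "0 < e" "e \<le> 1" by (auto simp: e_def)
    have le: "nsq (X k) \<le> (d + e)\<^sup>2" if "k \<ge> N" for k
    proof -
      have "1 / (real k + 1) \<le> e" unfolding e_def using that by (simp add: frac_le)
      then have "hnorm (X k) \<le> d + e" using X by (meson less_eq_real_def add_left_mono order_trans)
      then show ?thesis using hnorm_nonneg by (metis hnorm_sq power_mono)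
    qed
    have "nsq (X m - X n) \<le> 2 * (d + e)\<^sup>2 + 2 * (d + e)\<^sup>2 - 4 * d\<^sup>2"
      using mid[OF XS XS, of m n] le[OF that(1)] le[OF that(2)] by linarith
    also have "... = 4 * e * (2 * d + e)" by (simp add: power2_eq_square algebra_simps)
    also have "... \<le> 4 * e * (2 * d + 1)" using e0 by simp
    finally show ?thesis by (simp add: e_def)
  qed
  have "\<forall>e>0. \<exists>N::nat. \<forall>m\<ge>N. \<forall>n\<ge>N. sqrt (Re (cinner (X m - X n) (X m - X n))) < e"
  proof (intro allI impI)
    fix e :: real assume e: "0 < e"
    obtain N :: nat where N: "4 * (2 * d + 1) / e\<^sup>2 < real N" using reals_Archimedean2 by blast
    have pos: "0 < 4 * (2 * d + 1)" using d0 by simp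
    have "4 * (1 / (real N + 1)) * (2 * d + 1) < e\<^sup>2"
    proof -
      have "4 * (2 * d + 1) < e\<^sup>2 * real N" using N e by (simp add: field_simps)
      also have "... \<le> e\<^sup>2 * (real N + 1)" using e by simp
      finally show ?thesis by (simp add: field_simps)
    qed
    then have "\<forall>m\<ge>N. \<forall>n\<ge>N. nsq (X m - X n) < e\<^sup>2" using cauchy_est by (meson le_less_trans)
    then show "\<exists>N::nat. \<forall>m\<ge>N. \<forall>n\<ge>N. sqrt (Re (cinner (X m - X n) (X m - X n))) < e"
    proof (intro exI allI impI)
      fix m n assume "N \<le> m" "N \<le> n"
      then have "nsq (X m - X n) < e\<^sup>2" using \<open>\<forall>m\<ge>N. \<forall>n\<ge>N. nsq (X m - X n) < e\<^sup>2\<close> by blast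
      then have "sqrt (nsq (X m - X n)) < sqrt (e\<^sup>2)" by (rule real_sqrt_less_mono)
      then show "sqrt (Re (cinner (X m - X n) (X m - X n))) < e" using e by (simp add: nsq_def)
    qed
  qed
  from cinner_complete[OF this] obtain L where
    L: "\<forall>e>0. \<exists>N::nat. \<forall>n\<ge>N. hnorm (X n - L) < e"
    unfolding hnorm_def by blast
  have fL: "f L = 1"
  proof (rule ccontr)
    assume ne1: "f L \<noteq> 1"
    define \<delta> where "\<delta> = cmod (f L - 1)"
    have \<delta>: "0 < \<delta>" using ne1 by (simp add: \<delta>_def)
    obtain N where N: "\<forall>n\<ge>N. hnorm (X n - L) < \<delta> / (C + 1)"
      using L \<delta> C0 by (meson divide_pos_pos add_nonneg_pos zero_less_one)
    have "cmod (f (X N) - f L) = cmod (f (X N - L))" by (simp add: fdiff)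
    also have "... \<le> C * hnorm (X N - L)" by (rule bd)
    also have "... \<le> C * (\<delta> / (C + 1))"
    proof -
      have "hnorm (X N - L) \<le> \<delta> / (C + 1)" using N less_imp_le by blast
      then show ?thesis using C0 by (rule mult_left_mono)
    qed
    also have "... < \<delta>" using C0 \<delta> by (simp add: field_simps)
    finally have "cmod (1 - f L) < \<delta>" using XS[of N] by (simp add: S_def)
    then show False by (simp add: \<delta>_def norm_minus_commute)
  qed
  have hL: "hnorm L \<le> d"
  proof (rule field_le_epsilon)
    fix e :: real assume e: "0 < e"
    obtain N where N: "\<forall>n\<ge>N. hnorm (X n - L) < e / 2" using L e by (meson half_gt_zero)
    obtain M :: nat where M: "2 / e < real M" using reals_Archimedean2 by blast
    define n where "n = max N M"
    have "1 / (real n + 1) < e / 2"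
    proof -
      have "2 / e < real n + 1" using M by (simp add: n_def)
      then show ?thesis using e by (simp add: field_simps)
    qed
    have "L = (L - X n) + X n" by simp
    then have "hnorm L \<le> hnorm (L - X n) + hnorm (X n)" by (metis hnorm_triangle)
    also have "... < e / 2 + (d + 1 / (real n + 1))"
    proof (rule add_strict_mono)
      have "n \<ge> N" by (simp add: n_def)
      then show "hnorm (L - X n) < e / 2" using N hnorm_diff_commute[of L "X n"] by simp
      show "hnorm (X n) < d + 1 / (real n + 1)" using X by blast
    qed
    finally show "hnorm L \<le> d + e" using \<open>1 / (real n + 1) < e / 2\<close> by linarith
  qed
  have minL: "nsq L \<le> nsq x" if "x \<in> S" for x
  proof -
    have "hnorm L \<le> hnorm x" using hL d_le[OF that] by linarith
    then show ?thesis by (metis hnorm_nonneg hnorm_sq power_mono)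
  qed
  have Lne: "L \<noteq> 0" using fL f0 by auto
  have orth: "cinner n L = 0" if fn: "f n = 0" for n
  proof -
    define \<alpha> where "\<alpha> = cinner n L"
    define s where "s = 1 / (nsq n + 1)"
    define q where "q = (cmod \<alpha>)\<^sup>2"
    define t where "t = - (complex_of_real s) * cnj \<alpha>"
    have s0: "0 < s" using nsq_nonneg[of n] by (simp add: s_def)
    have sn: "s * nsq n < 1" using nsq_nonneg[of n] by (simp add: s_def field_simps)
    have "L + t *\<^sub>C n \<in> S" using fL fn by (simp add: S_def add sc)
    then have ineq: "nsq L \<le> nsq (L + t *\<^sub>C n)" by (rule minL)
    have Ln: "cinner L n = cnj \<alpha>" by (simp add: \<alpha>_def flip: cinner_commute)
    have aa: "\<alpha> * cnj \<alpha> = complex_of_real q" unfolding q_def by (rule complex_norm_square[symmetric])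
    have "cinner (L + t *\<^sub>C n) (L + t *\<^sub>C n) =
          complex_of_real (nsq L) + cnj t * cnj \<alpha> + t * \<alpha> + t * cnj t * complex_of_real (nsq n)"
      by (subst cinner_expand) (simp add: Ln \<alpha>_def cinner_self_nsq)
    also have "... = complex_of_real (nsq L) - 2 * complex_of_real s * (\<alpha> * cnj \<alpha>)
                      + (complex_of_real s)\<^sup>2 * (\<alpha> * cnj \<alpha>) * complex_of_real (nsq n)"
      by (simp add: t_def algebra_simps power2_eq_square)
    also have "... = complex_of_real (nsq L - 2 * s * q + s\<^sup>2 * q * nsq n)"
      by (simp add: aa)
    finally have "nsq (L + t *\<^sub>C n) = nsq L - 2 * s * q + s\<^sup>2 * q * nsq n"
      by (simp add: nsq_def)
    with ineq have "0 \<le> s * q * (s * nsq n - 2)" by (simp add: algebra_simps power2_eq_square)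
    moreover have neg: "s * nsq n - 2 < 0" using sn by simp
    ultimately have "s * q \<le> 0"
    proof -
      assume h: "0 \<le> s * q * (s * nsq n - 2)" "s * nsq n - 2 < 0"
      show "s * q \<le> 0"
      proof (rule ccontr)
        assume "\<not> s * q \<le> 0"
        then have "0 < s * q" by simp
        then have "s * q * (s * nsq n - 2) < 0" using h(2) by (rule mult_pos_neg)
        then show False using h(1) by simp
      qed
    qed
    then have "q \<le> 0" using s0 by (simp add: mult_le_0_iff)
    then have "q = 0" by (simp add: q_def)
    then show ?thesis by (simp add: q_def \<alpha>_def)
  qed
  have nL: "nsq L \<noteq> 0" using Lne nsq_eq0 by blast
  define w where "w = complex_of_real (1 / nsq L) *\<^sub>C L"
  have "f x = cinner x w" for x
  proof -
    have "f (x - f x *\<^sub>C L) = 0" by (simp add: fdiff sc fL)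
    then have "cinner (x - f x *\<^sub>C L) L = 0" by (rule orth)
    then have "cinner x L = f x * complex_of_real (nsq L)"
      by (simp add: cinner_diff_left cinner_scale_left cinner_self_nsq)
    then show ?thesis using nL by (simp add: w_def cinner_scale_right)
  qed
  then show ?thesis by blast
qed




definition bnd :: "('a::chilbert \<Rightarrow> 'b::chilbert) \<Rightarrow> bool" where
  "bnd f \<longleftrightarrow> (\<exists>C\<ge>0. \<forall>x. hnorm (f x) \<le> C * hnorm x)"

lemma bop_clinear: "bop f \<Longrightarrow> clinear f" by (simp add: bop_def)

lemma bop_bnd: assumes "bop f" shows "bnd f"
proof -
  obtain C where C: "\<forall>x. hnorm (f x) \<le> C * hnorm x" using assms by (auto simp: bop_def)
  have "hnorm (f x) \<le> max C 0 * hnorm x" for x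
  proof -
    have "C * hnorm x \<le> max C 0 * hnorm x" using hnorm_nonneg[of x] by (simp add: mult_right_mono)
    then show ?thesis using C by (meson order_trans)
  qed
  then show ?thesis unfolding bnd_def by (intro exI[of _ "max C 0"]) auto
qed

lemma bopI: "clinear f \<Longrightarrow> bnd f \<Longrightarrow> bop f"
  unfolding bop_def bnd_def by blast

lemma clinear_add: "clinear f \<Longrightarrow> f (x + y) = f x + f y" by (simp add: clinear_def)
lemma clinear_scale: "clinear f \<Longrightarrow> f (c *\<^sub>C x) = c *\<^sub>C f x" by (simp add: clinear_def)
lemma clinear_zero: "clinear f \<Longrightarrow> f 0 = 0"
  using clinear_scale[of f 0 0] by simp
lemma clinear_minus: "clinear f \<Longrightarrow> f (- x) = - f x"
  using clinear_scale[of f "-1" x] by simp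
lemma clinear_diff: "clinear f \<Longrightarrow> f (x - y) = f x - f y"
  using clinear_add[of f "x - y" y] by (simp add: eq_diff_eq)

lemma clinear_comp: "clinear f \<Longrightarrow> clinear g \<Longrightarrow> clinear (\<lambda>x. f (g x))"
  by (simp add: clinear_def)

lemma clinear_comp': "clinear f \<Longrightarrow> clinear g \<Longrightarrow> clinear (f \<circ> g)"
  by (simp add: clinear_def)

lemma bnd_comp: assumes "bnd f" "bnd g" shows "bnd (\<lambda>x. f (g x))"
proof -
  obtain C where C: "C \<ge> 0" "\<forall>x. hnorm (f x) \<le> C * hnorm x" using assms(1) by (auto simp: bnd_def)
  obtain D where D: "D \<ge> 0" "\<forall>x. hnorm (g x) \<le> D * hnorm x" using assms(2) by (auto simp: bnd_def)
  have "hnorm (f (g x)) \<le> (C * D) * hnorm x" for x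
  proof -
    have "hnorm (f (g x)) \<le> C * hnorm (g x)" using C by blast
    also have "... \<le> C * (D * hnorm x)" using C D by (simp add: mult_left_mono)
    finally show ?thesis by simp
  qed
  then show ?thesis unfolding bnd_def using C D by (intro exI[of _ "C * D"]) auto
qed

lemma bop_comp: assumes "bop f" "bop g" shows "bop (\<lambda>x. f (g x))"
  using bopI[OF clinear_comp[OF bop_clinear[OF assms(1)] bop_clinear[OF assms(2)]]
      bnd_comp[OF bop_bnd[OF assms(1)] bop_bnd[OF assms(2)]]] .

lemma bop_comp': "bop f \<Longrightarrow> bop g \<Longrightarrow> bop (f \<circ> g)"
  using bop_comp[of f g] by (simp add: comp_def)

lemma clinear_inverse:
  assumes "clinear f" "\<And>x. g (f x) = x" "\<And>y. f (g y) = y"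
  shows "clinear g"
  unfolding clinear_def
proof (intro conjI allI)
  fix x y
  have "g (x + y) = g (f (g x) + f (g y))" by (simp add: assms)
  also have "... = g (f (g x + g y))" by (simp add: clinear_add[OF assms(1)])
  finally show "g (x + y) = g x + g y" by (simp add: assms)
next
  fix c x
  have "g (c *\<^sub>C x) = g (c *\<^sub>C f (g x))" by (simp add: assms)
  also have "... = g (f (c *\<^sub>C g x))" by (simp add: clinear_scale[OF assms(1)])
  finally show "g (c *\<^sub>C x) = c *\<^sub>C g x" by (simp add: assms)
qed

lemma adjoint_exists:
  fixes T :: "'a::chilbert \<Rightarrow> 'b::chilbert"
  assumes T: "bop T"
  shows "\<exists>B. bop B \<and> (\<forall>h k. cinner h (B k) = cinner (T h) k)"
proof -
  obtain C where C: "C \<ge> 0" "\<forall>x. hnorm (T x) \<le> C * hnorm x"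
    using bop_bnd[OF T] by (auto simp: bnd_def)
  have lin: "clinear T" using T by (rule bop_clinear)
  have "\<exists>w. \<forall>h. cinner (T h) k = cinner h w" for k
  proof (rule riesz[where C = "C * hnorm k"])
    fix x y show "cinner (T (x + y)) k = cinner (T x) k + cinner (T y) k"
      by (simp add: clinear_add[OF lin] cinner_add_left)
  next
    fix c x show "cinner (T (c *\<^sub>C x)) k = c * cinner (T x) k"
      by (simp add: clinear_scale[OF lin] cinner_scale_left)
  next
    fix x
    have "cmod (cinner (T x) k) \<le> hnorm (T x) * hnorm k" by (rule cauchy_schwarz)
    also have "... \<le> (C * hnorm x) * hnorm k" using C hnorm_nonneg[of k] by (simp add: mult_right_mono)
    finally show "cmod (cinner (T x) k) \<le> C * hnorm k * hnorm x" by (simp add: algebra_simps)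
  qed
  then have "\<forall>k. \<exists>w. \<forall>h. cinner (T h) k = cinner h w" by blast
  from choice[OF this] obtain B where B: "\<forall>k h. cinner (T h) k = cinner h (B k)" by blast
  have Bp: "cinner h (B k) = cinner (T h) k" for h k using B by simp
  have linB: "clinear B" unfolding clinear_def
  proof (intro conjI allI)
    fix x y show "B (x + y) = B x + B y"
      by (rule cinner_ext) (simp add: Bp cinner_add_right)
  next
    fix c x show "B (c *\<^sub>C x) = c *\<^sub>C B x"
      by (rule cinner_ext) (simp add: Bp cinner_scale_right)
  qed
  have "hnorm (B k) \<le> C * hnorm k" for k
  proof (cases "hnorm (B k) = 0")
    case True then show ?thesis using C hnorm_nonneg[of k] by simp
  next
    case False
    then have pos: "0 < hnorm (B k)" using hnorm_nonneg[of "B k"] by simp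
    have "(hnorm (B k))\<^sup>2 = Re (cinner (B k) (B k))" by (simp add: hnorm_sq nsq_def)
    also have "... = Re (cinner (T (B k)) k)" by (simp add: Bp)
    also have "... \<le> cmod (cinner (T (B k)) k)" by (rule complex_Re_le_cmod)
    also have "... \<le> hnorm (T (B k)) * hnorm k" by (rule cauchy_schwarz)
    also have "... \<le> (C * hnorm (B k)) * hnorm k" using C hnorm_nonneg[of k] by (simp add: mult_right_mono)
    finally have "hnorm (B k) * hnorm (B k) \<le> hnorm (B k) * (C * hnorm k)"
      by (simp add: power2_eq_square algebra_simps)
    then show ?thesis using pos by simp
  qed
  then have "bnd B" unfolding bnd_def using C by blast
  then show ?thesis using linB Bp bopI by blast
qed

lemma pontryagin_J:
  assumes "pontryagin J"
  shows "bop J" "\<And>x. J (J x) = x" "\<And>x y. cinner (J x) y = cinner x (J y)"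
  using assms by (auto simp: pontryagin_def)

lemma padj_unique:
  assumes "\<forall>h k. cinner h (B k) = kinner J (G h) k"
  shows "padj J G = B"
  unfolding padj_def
proof (rule the_equality)
  show "\<forall>h k. cinner h (B k) = kinner J (G h) k" by (rule assms)
next
  fix B' assume "\<forall>h k. cinner h (B' k) = kinner J (G h) k"
  then show "B' = B" using assms by (intro ext cinner_ext) simp
qed

lemma padj_exists:
  fixes J :: "'k::chilbert \<Rightarrow> 'k" and G :: "'h::chilbert \<Rightarrow> 'k"
  assumes K: "pontryagin J" and G: "bop G"
  shows "bop (padj J G) \<and> (\<forall>h k. cinner h (padj J G k) = kinner J (G h) k)"
proof -
  have "bop (\<lambda>x. J (G x))" using pontryagin_J(1)[OF K] G by (rule bop_comp)
  from adjoint_exists[OF this] obtain B where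
    B: "bop B" "\<forall>h k. cinner h (B k) = cinner (J (G h)) k" by blast
  then have "\<forall>h k. cinner h (B k) = kinner J (G h) k" by (simp add: kinner_def)
  then have "padj J G = B" by (rule padj_unique)
  then show ?thesis using B(1) \<open>\<forall>h k. cinner h (B k) = kinner J (G h) k\<close> by simp
qed




lemma binv:
  assumes "binvertible T"
  shows "bop (inv T)" "\<And>x. inv T (T x) = x" "\<And>y. T (inv T y) = y"
proof -
  obtain B where B: "bop B" "\<And>x. B (T x) = x" "\<And>y. T (B y) = y"
    using assms unfolding binvertible_def by blast
  have inj: "inj T" by (metis B(2) injI)
  have eq: "inv T = B"
  proof
    fix y show "inv T y = B y" using inv_f_f[OF inj, of "B y"] B(3) by simp
  qed
  show "bop (inv T)" using B(1) eq by simp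
  show "\<And>x. inv T (T x) = x" using eq B(2) by simp
  show "\<And>y. T (inv T y) = y" using eq B(3) by simp
qed

lemma inv_two_sided:
  assumes "\<And>x. g (f x) = x" "\<And>y. f (g y) = y"
  shows "inv f = g"
proof
  have inj: "inj f" by (metis assms(1) injI)
  fix y show "inv f y = g y" using inv_f_f[OF inj, of "g y"] assms(2) by simp
qed

lemma bnd_add: assumes "bnd f" "bnd g" shows "bnd (\<lambda>x. f x + g x)"
proof -
  obtain C where C: "C \<ge> 0" "\<forall>x. hnorm (f x) \<le> C * hnorm x" using assms(1) by (auto simp: bnd_def)
  obtain D where D: "D \<ge> 0" "\<forall>x. hnorm (g x) \<le> D * hnorm x" using assms(2) by (auto simp: bnd_def)
  have "hnorm (f x + g x) \<le> (C + D) * hnorm x" for x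
  proof -
    have "hnorm (f x + g x) \<le> hnorm (f x) + hnorm (g x)" by (rule hnorm_triangle)
    also have "... \<le> C * hnorm x + D * hnorm x" using C D by (meson add_mono)
    finally show ?thesis by (simp add: algebra_simps)
  qed
  then show ?thesis unfolding bnd_def using C D by (intro exI[of _ "C + D"]) auto
qed

lemma bnd_scale: assumes "bnd f" shows "bnd (\<lambda>x. c *\<^sub>C f x)"
proof -
  obtain C where C: "C \<ge> 0" "\<forall>x. hnorm (f x) \<le> C * hnorm x" using assms(1) by (auto simp: bnd_def)
  have "hnorm (c *\<^sub>C f x) \<le> (cmod c * C) * hnorm x" for x
    using C by (simp add: hnorm_scale mult_left_mono mult.assoc)
  then show ?thesis unfolding bnd_def using C by (intro exI[of _ "cmod c * C"]) auto
qed

lemma bnd_id: "bnd (\<lambda>x. x)" unfolding bnd_def by (intro exI[of _ 1]) auto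

lemma bnd_minus: "bnd f \<Longrightarrow> bnd (\<lambda>x. - f x)"
  using bnd_scale[of f "-1"] by simp

lemma bnd_diff: "bnd f \<Longrightarrow> bnd g \<Longrightarrow> bnd (\<lambda>x. f x - g x)"
  using bnd_add[of f "\<lambda>x. - g x"] bnd_minus[of g] by simp

lemma bnd_cong: "bnd f \<Longrightarrow> (\<And>x. f x = g x) \<Longrightarrow> bnd g"
proof -
  assume "bnd f" "\<And>x. f x = g x"
  then have "f = g" by auto
  then show "bnd g" using \<open>bnd f\<close> by simp
qed

locale setting =
  fixes J :: "'k::chilbert \<Rightarrow> 'k"
    and A P At :: "'k \<Rightarrow> 'k"
    and G0 Gam Gamhat :: "'h::chilbert \<Rightarrow> 'k"
    and Q :: "complex \<Rightarrow> 'h \<Rightarrow> 'h"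
    and z0 :: complex
    and Ahat :: "('k \<times> 'k) set"
  assumes K: "pontryagin J"
    and A_bounded: "bop A"
    and A_selfadj: "\<forall>x y. kinner J (A x) y = kinner J x (A y)"
    and G0_bounded: "bop G0"
    and G0_inv: "binvertible (padj J G0 \<circ> G0)"
    and Q_def: "\<forall>z. Q z = padj J G0 \<circ> cresolvent A z \<circ> G0"
    and P_def: "P = G0 \<circ> inv (padj J G0 \<circ> G0) \<circ> padj J G0"
    and At_def: "At = (\<lambda>x. x - P x) \<circ> A \<circ> (\<lambda>x. x - P x)"
    and z0_A: "z0 \<in> cres A"
    and z0_At: "z0 \<in> res_on (range (\<lambda>x. x - P x)) At"
    and z0_upper: "0 < Im z0"
    and Gam_def: "Gam = cresolvent A z0 \<circ> G0"
    and Gamhat_def: "Gamhat = (\<lambda>h. - Gam (inv (Q z0) h))"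
    and Ahat_def: "rinv (rshift Ahat z0) =
       ograph (\<lambda>x. cresolvent A z0 x
                  - cresolvent A z0 (G0 (inv (Q z0) (padj J G0 (cresolvent A z0 x)))))"
begin

lemma Jlin: "clinear J" using pontryagin_J(1)[OF K] by (rule bop_clinear)
lemma JJ[simp]: "J (J x) = x" using pontryagin_J(2)[OF K] .
lemma Jsym: "cinner (J x) y = cinner x (J y)" using pontryagin_J(3)[OF K] .

abbreviation ki (infix "\<bullet>\<bullet>" 70) where "x \<bullet>\<bullet> y \<equiv> kinner J x y"

lemma ki_conj: "y \<bullet>\<bullet> x = cnj (x \<bullet>\<bullet> y)"
  unfolding kinner_def by (simp add: Jsym flip: cinner_commute)

lemma ki_add_left: "(x + y) \<bullet>\<bullet> z = x \<bullet>\<bullet> z + y \<bullet>\<bullet> z"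
  unfolding kinner_def by (simp add: clinear_add[OF Jlin] cinner_add_left)
lemma ki_add_right: "z \<bullet>\<bullet> (x + y) = z \<bullet>\<bullet> x + z \<bullet>\<bullet> y"
  unfolding kinner_def by (simp add: cinner_add_right)
lemma ki_diff_left: "(x - y) \<bullet>\<bullet> z = x \<bullet>\<bullet> z - y \<bullet>\<bullet> z"
  unfolding kinner_def by (simp add: clinear_diff[OF Jlin] cinner_diff_left)
lemma ki_diff_right: "z \<bullet>\<bullet> (x - y) = z \<bullet>\<bullet> x - z \<bullet>\<bullet> y"
  unfolding kinner_def by (simp add: cinner_diff_right)
lemma ki_scale_left: "(c *\<^sub>C x) \<bullet>\<bullet> z = c * (x \<bullet>\<bullet> z)"
  unfolding kinner_def by (simp add: clinear_scale[OF Jlin] cinner_scale_left)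
lemma ki_scale_right: "z \<bullet>\<bullet> (c *\<^sub>C x) = cnj c * (z \<bullet>\<bullet> x)"
  unfolding kinner_def by (simp add: cinner_scale_right)
lemma ki_minus_left: "(- x) \<bullet>\<bullet> z = - (x \<bullet>\<bullet> z)"
  unfolding kinner_def by (simp add: clinear_minus[OF Jlin] cinner_minus_left)
lemma ki_minus_right: "z \<bullet>\<bullet> (- x) = - (z \<bullet>\<bullet> x)"
  unfolding kinner_def by (simp add: cinner_minus_right)
lemma ki_zero_left[simp]: "0 \<bullet>\<bullet> z = 0"
  unfolding kinner_def by (simp add: clinear_zero[OF Jlin])
lemma ki_zero_right[simp]: "z \<bullet>\<bullet> 0 = 0"
  unfolding kinner_def by simp

lemmas ki_simps = ki_add_left ki_add_right ki_diff_left ki_diff_right ki_scale_left ki_scale_right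
  ki_minus_left ki_minus_right

lemma ki_ext_right: assumes "\<And>a. a \<bullet>\<bullet> u = a \<bullet>\<bullet> v" shows "u = v"
proof (rule cinner_ext)
  fix h show "cinner h u = cinner h v" using assms[of "J h"] by (simp add: kinner_def)
qed

lemma ki_ext_left: assumes "\<And>a. u \<bullet>\<bullet> a = v \<bullet>\<bullet> a" shows "u = v"
proof (rule ki_ext_right)
  fix a show "a \<bullet>\<bullet> u = a \<bullet>\<bullet> v" using assms[of a] by (metis ki_conj)
qed

lemma A_lin: "clinear A" using A_bounded by (rule bop_clinear)
lemma G_lin: "clinear G0" using G0_bounded by (rule bop_clinear)

lemma A_sa: "A x \<bullet>\<bullet> y = x \<bullet>\<bullet> A y" using A_selfadj by blast

definition resolv :: "complex \<Rightarrow> ('k \<Rightarrow> 'k) \<Rightarrow> bool" where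
  "resolv z R \<longleftrightarrow> clinear R \<and> (\<forall>x. R (A x - z *\<^sub>C x) = x) \<and> (\<forall>y. A (R y) - z *\<^sub>C R y = y)"

lemma resolv_cres: assumes "z \<in> cres A" shows "resolv z (cresolvent A z)" "bop (cresolvent A z)"
proof -
  have b: "binvertible (\<lambda>x. A x - z *\<^sub>C x)" using assms by (simp add: cres_def)
  note bi = binv[OF b]
  show "bop (cresolvent A z)" using bi(1) by (simp add: cresolvent_def)
  then show "resolv z (cresolvent A z)" using bi(2,3)
    by (simp add: resolv_def cresolvent_def bop_clinear)
qed

lemma resolv_A: "resolv z R \<Longrightarrow> A (R y) = y + z *\<^sub>C R y"
  unfolding resolv_def by (metis diff_eq_eq)

lemma resolv_identity:
  assumes z: "resolv z Rz" and w: "resolv w Rw"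
  shows "Rz y - Rw y = (z - w) *\<^sub>C Rz (Rw y)"
proof -
  have lz: "clinear Rz" using z by (simp add: resolv_def)
  define v where "v = Rz y - Rw y"
  have "A v - z *\<^sub>C v = (z - w) *\<^sub>C Rw y"
    by (simp add: v_def clinear_diff[OF A_lin] resolv_A[OF z] resolv_A[OF w]
        cscale_diff_right cscale_diff_left algebra_simps)
  then have "Rz (A v - z *\<^sub>C v) = Rz ((z - w) *\<^sub>C Rw y)" by simp
  then show ?thesis using z by (simp add: resolv_def v_def clinear_scale[OF lz])
qed

lemma resolv_identity':
  assumes z: "resolv z Rz" and w: "resolv w Rw"
  shows "Rz y - Rw y = (z - w) *\<^sub>C Rw (Rz y)"
proof -
  have "Rw y - Rz y = (w - z) *\<^sub>C Rw (Rz y)" by (rule resolv_identity[OF w z])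
  then have "Rz y - Rw y = - ((w - z) *\<^sub>C Rw (Rz y))" by (metis minus_diff_eq)
  then show ?thesis by (simp flip: cscale_minus_left)
qed

end



context setting
begin

abbreviation "R0 \<equiv> cresolvent A z0"
abbreviation "Rc \<equiv> cresolvent A (cnj z0)"
abbreviation "Gp \<equiv> padj J G0"

lemma R0: "resolv z0 R0" "bop R0" using resolv_cres[OF z0_A] by auto

lemma R0_lin: "clinear R0" using R0 by (simp add: resolv_def)

lemma Rc: "resolv (cnj z0) Rc \<and> (\<forall>x y. R0 x \<bullet>\<bullet> y = x \<bullet>\<bullet> Rc y)"
proof -
  have "bop (\<lambda>x. J (R0 x))" using pontryagin_J(1)[OF K] R0(2) by (rule bop_comp)
  from adjoint_exists[OF this] obtain B where B: "bop B" "\<forall>h k. cinner h (B k) = cinner (J (R0 h)) k"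
    by blast
  define R1 where "R1 = (\<lambda>y. J (B y))"
  have adj: "R0 x \<bullet>\<bullet> y = x \<bullet>\<bullet> R1 y" for x y
    using B(2) by (simp add: R1_def kinner_def Jsym)
  have lin1: "clinear R1" unfolding R1_def using Jlin bop_clinear[OF B(1)] by (rule clinear_comp)
  have r0l: "R0 (A x - z0 *\<^sub>C x) = x" for x using R0(1) by (simp add: resolv_def)
  have r0r: "A (R0 y) - z0 *\<^sub>C R0 y = y" for y using R0(1) by (simp add: resolv_def)
  have right: "A (R1 y) - cnj z0 *\<^sub>C R1 y = y" for y
  proof (rule ki_ext_right)
    fix a
    have "a \<bullet>\<bullet> (A (R1 y) - cnj z0 *\<^sub>C R1 y) = A a \<bullet>\<bullet> R1 y - z0 * (a \<bullet>\<bullet> R1 y)"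
      by (simp add: ki_simps A_sa)
    also have "... = (A a - z0 *\<^sub>C a) \<bullet>\<bullet> R1 y" by (simp add: ki_simps)
    also have "... = R0 (A a - z0 *\<^sub>C a) \<bullet>\<bullet> y" by (simp add: adj)
    finally show "a \<bullet>\<bullet> (A (R1 y) - cnj z0 *\<^sub>C R1 y) = a \<bullet>\<bullet> y" by (simp add: r0l)
  qed
  have left: "R1 (A x - cnj z0 *\<^sub>C x) = x" for x
  proof (rule ki_ext_right)
    fix a
    have "a \<bullet>\<bullet> R1 (A x - cnj z0 *\<^sub>C x) = R0 a \<bullet>\<bullet> (A x - cnj z0 *\<^sub>C x)" by (simp add: adj)
    also have "... = A (R0 a) \<bullet>\<bullet> x - z0 * (R0 a \<bullet>\<bullet> x)" by (simp add: ki_simps A_sa)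
    also have "... = (A (R0 a) - z0 *\<^sub>C R0 a) \<bullet>\<bullet> x" by (simp add: ki_simps)
    finally show "a \<bullet>\<bullet> R1 (A x - cnj z0 *\<^sub>C x) = a \<bullet>\<bullet> x" by (simp add: r0r)
  qed
  have "inv (\<lambda>x. A x - cnj z0 *\<^sub>C x) = R1" using left right by (rule inv_two_sided)
  then have "Rc = R1" by (simp add: cresolvent_def)
  then show ?thesis using lin1 left right adj by (simp add: resolv_def)
qed

lemma Rc_resolv: "resolv (cnj z0) Rc" using Rc by blast
lemma R0_adj: "R0 x \<bullet>\<bullet> y = x \<bullet>\<bullet> Rc y" using Rc by blast
lemma Rc_lin: "clinear Rc" using Rc_resolv by (simp add: resolv_def)

lemma Gp: "bop Gp" "cinner h (Gp k) = G0 h \<bullet>\<bullet> k"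
  using padj_exists[OF K G0_bounded] by auto

lemma Gp_lin: "clinear Gp" using Gp(1) by (rule bop_clinear)

lemma Gp_left: "cinner (Gp k) h = k \<bullet>\<bullet> G0 h"
  by (metis Gp(2) cinner_commute ki_conj)

abbreviation "Si \<equiv> inv (Gp \<circ> G0)"

lemma Si: "bop Si" "Si (Gp (G0 h)) = h" "Gp (G0 (Si k)) = k"
  using binv[OF G0_inv] by auto

lemma Si_lin: "clinear Si" using Si(1) by (rule bop_clinear)

lemma P_eq: "P x = G0 (Si (Gp x))" by (simp add: P_def)

lemma P_lin: "clinear P"
  unfolding P_def by (rule clinear_comp'[OF clinear_comp'[OF G_lin Si_lin] Gp_lin])

lemma P_bop: "bop P" unfolding P_def by (rule bop_comp'[OF bop_comp'[OF G0_bounded Si(1)] Gp(1)])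

lemma Gp_P: "Gp (P x) = Gp x" by (simp add: P_eq Si)
lemma P_G: "P (G0 h) = G0 h" by (simp add: P_eq Si)
lemma PP: "P (P x) = P x" by (simp add: P_eq Si)

definition IP :: "'k \<Rightarrow> 'k" where "IP x = x - P x"

lemma IP_fun: "(\<lambda>x. x - P x) = IP" by (simp add: IP_def[abs_def])

lemma IP_lin: "clinear IP"
  unfolding clinear_def IP_def using P_lin
  by (simp add: clinear_add clinear_scale cscale_diff_right algebra_simps)

lemma IP_IP: "IP (IP x) = IP x"
  unfolding IP_def by (simp add: clinear_diff[OF P_lin] PP)
lemma Gp_IP: "Gp (IP x) = 0" unfolding IP_def by (simp add: clinear_diff[OF Gp_lin] Gp_P)
lemma IP_G: "IP (G0 h) = 0" unfolding IP_def by (simp add: P_G)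

lemma At_eq: "At x = IP (A (IP x))" by (simp add: At_def IP_fun)

lemma G_inj0: "G0 h = 0 \<Longrightarrow> h = 0"
  by (metis Si(2) clinear_zero Gp_lin Si_lin)

end



context setting
begin

lemma Q_apply: "Q z h = Gp (cresolvent A z (G0 h))" by (simp add: Q_def)

abbreviation "M \<equiv> range IP"
definition T0 where "T0 x = At x - z0 *\<^sub>C x"
definition Lz where "Lz v = A v - z0 *\<^sub>C v"

lemma Lz_lin: "clinear Lz"
  unfolding clinear_def
proof (intro conjI allI)
  fix x y show "Lz (x + y) = Lz x + Lz y"
    unfolding Lz_def by (simp add: clinear_add[OF A_lin] cscale_add_right algebra_simps)
next
  fix c x show "Lz (c *\<^sub>C x) = c *\<^sub>C Lz x"
    unfolding Lz_def by (simp only: clinear_scale[OF A_lin] cscale_diff_right cscale_mult mult.commute)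
qed

lemma T0_bij: "bij_betw T0 M M"
  using z0_At unfolding res_on_def T0_def[abs_def] IP_def[abs_def] by simp

lemma T0_bound: "\<exists>C\<ge>0. \<forall>y\<in>M. hnorm (inv_into M T0 y) \<le> C * hnorm y"
proof -
  obtain C where C: "\<forall>y\<in>M. hnorm (inv_into M T0 y) \<le> C * hnorm y"
    using z0_At unfolding res_on_def T0_def[abs_def] IP_def[abs_def] by auto
  have "\<forall>y\<in>M. hnorm (inv_into M T0 y) \<le> max C 0 * hnorm y"
  proof
    fix y assume "y \<in> M"
    then have "hnorm (inv_into M T0 y) \<le> C * hnorm y" using C by blast
    also have "... \<le> max C 0 * hnorm y" using hnorm_nonneg[of y] by (simp add: mult_right_mono)
    finally show "hnorm (inv_into M T0 y) \<le> max C 0 * hnorm y" .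
  qed
  then show ?thesis by (intro exI[of _ "max C 0"]) auto
qed

lemma M_IP: "y \<in> M \<Longrightarrow> IP y = y" using IP_IP by auto

lemma T0_M: assumes "y \<in> M" shows "T0 y = IP (Lz y)"
proof -
  have "T0 y = IP (A y) - z0 *\<^sub>C y" using M_IP[OF assms] by (simp add: T0_def At_eq)
  moreover have "IP (Lz y) = IP (A y) - z0 *\<^sub>C IP y"
    unfolding Lz_def by (simp only: clinear_diff[OF IP_lin] clinear_scale[OF IP_lin])
  ultimately show ?thesis using M_IP[OF assms] by simp
qed

lemma Q0_lin: "clinear (Q z0)"
proof -
  have "clinear (\<lambda>h. Gp (R0 (G0 h)))"
    using Gp_lin clinear_comp[OF R0_lin G_lin] by (rule clinear_comp)
  then show ?thesis by (simp add: Q_apply[abs_def])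
qed

lemma Q0_ker: assumes "Q z0 h = 0" shows "h = 0"
proof -
  define x where "x = R0 (G0 h)"
  have Gx: "Gp x = 0" using assms by (simp add: Q_apply x_def)
  have Px: "P x = 0" by (simp add: P_eq Gx clinear_zero[OF Si_lin] clinear_zero[OF G_lin] clinear_zero[OF Gp_lin])
  have "IP x \<in> M" by (rule rangeI)
  then have xM: "x \<in> M" using Px by (simp add: IP_def)
  have Lx: "Lz x = G0 h" using R0(1) by (simp add: resolv_def x_def Lz_def)
  have "T0 x = 0" using T0_M[OF xM] Lx IP_G by simp
  moreover have "T0 0 = 0" by (simp add: T0_def At_eq clinear_zero[OF A_lin] clinear_zero[OF IP_lin])
  moreover have "IP 0 \<in> M" by (rule rangeI)
  then have "0 \<in> M" by (simp add: clinear_zero[OF IP_lin])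
  ultimately have "x = 0" using inj_onD[OF bij_betw_imp_inj_on[OF T0_bij], of x 0] xM by simp
  then have "G0 h = 0" using Lx by (simp add: Lz_def clinear_zero[OF A_lin])
  then show ?thesis by (rule G_inj0)
qed

definition gM where "gM v = inv_into M T0 (IP v)"
definition Phi where "Phi k = Si (Gp (Lz (G0 (Si k) + gM (- Lz (G0 (Si k))))))"

lemma Q0_Phi: "Q z0 (Phi k) = k"
proof -
  define u where "u = Si k"
  define y where "y = gM (- Lz (G0 u))"
  define x where "x = G0 u + y"
  have inM: "IP (- Lz (G0 u)) \<in> M" by blast
  have imgM: "T0 ` M = M" using T0_bij by (simp add: bij_betw_def)
  have yM: "y \<in> M" unfolding y_def gM_def using inv_into_into[of "IP (- Lz (G0 u))" T0 M] inM imgM by simp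
  have Ty: "T0 y = IP (- Lz (G0 u))" unfolding y_def gM_def using f_inv_into_f[of "IP (- Lz (G0 u))" T0 M] inM imgM by simp
  have "IP (Lz x) = IP (Lz (G0 u)) + IP (Lz y)"
    by (simp add: x_def clinear_add[OF Lz_lin] clinear_add[OF IP_lin])
  also have "IP (Lz y) = - IP (Lz (G0 u))" using Ty T0_M[OF yM] by (simp add: clinear_minus[OF IP_lin])
  finally have "IP (Lz x) = 0" by simp
  then have "Lz x = P (Lz x)" by (simp add: IP_def)
  then have Lx: "Lz x = G0 (Phi k)" by (simp add: P_eq Phi_def x_def y_def u_def)
  have "R0 (G0 (Phi k)) = x" using R0(1) Lx[symmetric] by (simp add: resolv_def Lz_def)
  then have "Q z0 (Phi k) = Gp x" by (simp add: Q_apply)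
  also have "... = Gp (G0 u) + Gp y" by (simp add: x_def clinear_add[OF Gp_lin])
  also have "Gp y = 0" using yM Gp_IP by auto
  finally show ?thesis by (simp add: u_def Si)
qed

lemma Phi_Q0: "Phi (Q z0 h) = h"
proof -
  have "Q z0 (Phi (Q z0 h) - h) = 0"
    by (simp add: clinear_diff[OF Q0_lin] Q0_Phi)
  then show ?thesis using Q0_ker[of "Phi (Q z0 h) - h"] by simp
qed

lemma inv_Q0: "inv (Q z0) = Phi" using Phi_Q0 Q0_Phi by (rule inv_two_sided)

lemma bnd_gM: "bnd gM"
proof -
  obtain C where C: "C \<ge> 0" "\<forall>y\<in>M. hnorm (inv_into M T0 y) \<le> C * hnorm y" using T0_bound by blast
  have "bnd IP" using bnd_diff[OF bnd_id bop_bnd[OF P_bop]] by (simp add: IP_fun)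
  then obtain D where D: "D \<ge> 0" "\<forall>x. hnorm (IP x) \<le> D * hnorm x" by (auto simp: bnd_def)
  have "hnorm (gM v) \<le> (C * D) * hnorm v" for v
  proof -
    have "hnorm (gM v) \<le> C * hnorm (IP v)" unfolding gM_def using C by blast
    also have "... \<le> C * (D * hnorm v)" using C D by (simp add: mult_left_mono)
    finally show ?thesis by simp
  qed
  then show ?thesis unfolding bnd_def using C D by (intro exI[of _ "C * D"]) auto
qed

lemma bnd_Phi: "bnd Phi"
proof -
  have bSi: "bnd Si" using Si(1) by (rule bop_bnd)
  have bGp: "bnd Gp" using Gp(1) by (rule bop_bnd)
  have bG: "bnd G0" using G0_bounded by (rule bop_bnd)
  have bL: "bnd Lz" using bnd_diff[OF bop_bnd[OF A_bounded] bnd_scale[OF bnd_id, of z0]]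
    by (simp add: Lz_def[abs_def])
  have b1: "bnd (\<lambda>k. G0 (Si k))" using bG bSi by (rule bnd_comp)
  have b2: "bnd (\<lambda>k. Lz (G0 (Si k)))" using bL b1 by (rule bnd_comp)
  have b3: "bnd (\<lambda>k. - Lz (G0 (Si k)))" using b2 by (rule bnd_minus)
  have b4: "bnd (\<lambda>k. gM (- Lz (G0 (Si k))))" using bnd_gM b3 by (rule bnd_comp)
  have b5: "bnd (\<lambda>k. G0 (Si k) + gM (- Lz (G0 (Si k))))" using b1 b4 by (rule bnd_add)
  have b6: "bnd (\<lambda>k. Lz (G0 (Si k) + gM (- Lz (G0 (Si k)))))" using bL b5 by (rule bnd_comp)
  have b7: "bnd (\<lambda>k. Gp (Lz (G0 (Si k) + gM (- Lz (G0 (Si k))))))" using bGp b6 by (rule bnd_comp)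
  have b8: "bnd (\<lambda>k. Si (Gp (Lz (G0 (Si k) + gM (- Lz (G0 (Si k)))))))" using bSi b7 by (rule bnd_comp)
  then show ?thesis unfolding Phi_def[abs_def] .
qed

abbreviation "Qi0 \<equiv> inv (Q z0)"

lemma Qi0: "Q z0 (Qi0 k) = k" "Qi0 (Q z0 h) = h" "clinear Qi0" "bop Qi0"
proof -
  show "Q z0 (Qi0 k) = k" "Qi0 (Q z0 h) = h" by (simp_all add: inv_Q0 Q0_Phi Phi_Q0)
  show lin: "clinear Qi0" using Q0_lin by (rule clinear_inverse) (simp_all add: inv_Q0 Q0_Phi Phi_Q0)
  show "bop Qi0" using lin bnd_Phi by (simp add: inv_Q0 bopI)
qed

end



lemma lin_rules:
  assumes "clinear f"
  shows "f (x + y) = f x + f y" "f (x - y) = f x - f y" "f (c *\<^sub>C x) = c *\<^sub>C f x"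
    "f (- x) = - f x" "f 0 = 0"
  using assms by (simp_all add: clinear_add clinear_diff clinear_scale clinear_minus clinear_zero)

context setting
begin

abbreviation "Qc \<equiv> Q (cnj z0)"
abbreviation "Qic \<equiv> inv (Q (cnj z0))"

lemma Q_hadj: "cinner (Q z0 h) g = cinner h (Qc g)"
proof -
  have "cinner (Q z0 h) g = R0 (G0 h) \<bullet>\<bullet> G0 g" by (simp add: Q_apply Gp_left)
  also have "... = G0 h \<bullet>\<bullet> Rc (G0 g)" by (rule R0_adj)
  also have "... = cinner h (Qc g)" by (simp add: Q_apply Gp(2))
  finally show ?thesis .
qed

lemma Qic: "Qc (Qic k) = k" "Qic (Qc h) = h" "clinear Qic" "cinner (Qi0 h) g = cinner h (Qic g)"
proof -
  from adjoint_exists[OF Qi0(4)] obtain V where V: "bop V" "\<forall>h k. cinner h (V k) = cinner (Qi0 h) k"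
    by blast
  have a: "Qc (V g) = g" for g
  proof (rule cinner_ext)
    fix h
    have "cinner h (Qc (V g)) = cinner (Q z0 h) (V g)" by (simp add: Q_hadj)
    also have "... = cinner h g" using V(2) by (simp add: Qi0(2))
    finally show "cinner h (Qc (V g)) = cinner h g" .
  qed
  have b: "V (Qc g) = g" for g
  proof (rule cinner_ext)
    fix h
    have "cinner h (V (Qc g)) = cinner (Qi0 h) (Qc g)" using V(2) by simp
    also have "... = cinner (Q z0 (Qi0 h)) g" by (simp add: Q_hadj)
    finally show "cinner h (V (Qc g)) = cinner h g" by (simp add: Qi0(1))
  qed
  have eq: "Qic = V" using b a by (rule inv_two_sided)
  show "Qc (Qic k) = k" "Qic (Qc h) = h" using a b eq by simp_all
  show "clinear Qic" using eq V(1) bop_clinear by simp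
  show "cinner (Qi0 h) g = cinner h (Qic g)" using eq V(2) by simp
qed

definition Rh :: "('k \<Rightarrow> 'k) \<Rightarrow> ('h \<Rightarrow> 'h) \<Rightarrow> 'k \<Rightarrow> 'k" where
  "Rh R Qi y = R y - R (G0 (Qi (Gp (R y))))"

lemma Rh_lin: assumes "clinear R" "clinear Qi" shows "clinear (Rh R Qi)"
proof -
  have "clinear (\<lambda>y. R (G0 (Qi (Gp (R y)))))"
    using assms(1) clinear_comp[OF G_lin clinear_comp[OF assms(2) clinear_comp[OF Gp_lin assms(1)]]]
    by (rule clinear_comp)
  then show ?thesis using assms(1) unfolding clinear_def Rh_def
    by (simp add: cscale_diff_right algebra_simps)
qed

lemma krein:
  assumes z: "resolv z Rz" and w: "resolv w Rw" and lz: "clinear Qiz"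
    and qz: "\<And>h. Qiz (Gp (Rz (G0 h))) = h" and qw: "\<And>k. Gp (Rw (G0 (Qiw k))) = k"
  shows "Rh Rz Qiz y - Rh Rw Qiw y = (z - w) *\<^sub>C Rh Rz Qiz (Rh Rw Qiw y)"
proof -
  have lRz: "clinear Rz" using z by (simp add: resolv_def)
  have lRw: "clinear Rw" using w by (simp add: resolv_def)
  note L = lin_rules[OF lRz] lin_rules[OF lRw] lin_rules[OF lz] lin_rules[OF Gp_lin] lin_rules[OF G_lin]
  define D where "D = z - w"
  define u where "u = Qiw (Gp (Rw y))"
  define v where "v = Rh Rw Qiw y"
  have v: "v = Rw y - Rw (G0 u)" by (simp add: v_def u_def Rh_def)
  have Gpv: "Gp v = 0" by (simp add: v L u_def qw)
  have ri: "D *\<^sub>C Rz (Rw x) = Rz x - Rw x" for x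
    using resolv_identity[OF z w, of x] by (simp add: D_def)
  have DRzv: "D *\<^sub>C Rz v = Rz y - Rz (G0 u) - v"
  proof -
    have "D *\<^sub>C Rz v = D *\<^sub>C Rz (Rw y) - D *\<^sub>C Rz (Rw (G0 u))"
      by (simp add: v L cscale_diff_right)
    also have "... = (Rz y - Rw y) - (Rz (G0 u) - Rw (G0 u))" by (simp add: ri)
    finally show ?thesis by (simp add: v)
  qed
  have GpD: "Gp (D *\<^sub>C Rz v) = Gp (Rz y) - Gp (Rz (G0 u))"
    by (simp only: DRzv L Gpv) simp
  have QiGp: "Qiz (Gp (D *\<^sub>C Rz v)) = Qiz (Gp (Rz y)) - u"
    unfolding GpD by (simp only: L qz)
  have "D *\<^sub>C Rh Rz Qiz v = D *\<^sub>C Rz v - D *\<^sub>C Rz (G0 (Qiz (Gp (Rz v))))"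
    by (simp add: Rh_def cscale_diff_right)
  also have "D *\<^sub>C Rz (G0 (Qiz (Gp (Rz v)))) = Rz (G0 (Qiz (Gp (D *\<^sub>C Rz v))))"
    by (simp only: L)
  also have "... = Rz (G0 (Qiz (Gp (Rz y)))) - Rz (G0 u)" unfolding QiGp by (simp only: L)
  finally have "D *\<^sub>C Rh Rz Qiz v = Rh Rz Qiz y - v"
    by (simp add: DRzv Rh_def algebra_simps)
  then show ?thesis by (simp add: D_def v_def)
qed

abbreviation "Rh0 \<equiv> Rh R0 Qi0"
abbreviation "Rhc \<equiv> Rh Rc Qic"

lemma Rh0_lin: "clinear Rh0" using R0_lin Qi0(3) by (rule Rh_lin)
lemma Rhc_lin: "clinear Rhc" using Rc_lin Qic(3) by (rule Rh_lin)

lemma krein_0c: "Rh0 y - Rhc y = (z0 - cnj z0) *\<^sub>C Rh0 (Rhc y)"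
  by (rule krein[OF R0(1) Rc_resolv Qi0(3)]) (simp_all add: Qic(1) Qi0(2) flip: Q_apply)

lemma krein_c0: "Rhc y - Rh0 y = (cnj z0 - z0) *\<^sub>C Rhc (Rh0 y)"
  by (rule krein[OF Rc_resolv R0(1) Qic(3)]) (simp_all add: Qic(2) Qi0(1) flip: Q_apply)

lemma Ahat_eq: "rinv (rshift Ahat z0) = ograph Rh0"
  using Ahat_def by (simp add: Rh_def[abs_def])

lemma Ahat_char: "(a, b) \<in> Ahat \<longleftrightarrow> a = Rh0 (b - z0 *\<^sub>C a)"
proof
  assume "(a, b) \<in> Ahat"
  then have "(a, b - z0 *\<^sub>C a) \<in> rshift Ahat z0" unfolding rshift_def by blast
  then have "(b - z0 *\<^sub>C a, a) \<in> rinv (rshift Ahat z0)" unfolding rinv_def by blast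
  then show "a = Rh0 (b - z0 *\<^sub>C a)" unfolding Ahat_eq ograph_def by blast
next
  assume a: "a = Rh0 (b - z0 *\<^sub>C a)"
  have "(b - z0 *\<^sub>C a, a) \<in> ograph Rh0" unfolding ograph_def using a by blast
  then have "(b - z0 *\<^sub>C a, a) \<in> rinv (rshift Ahat z0)" by (simp add: Ahat_eq)
  then have "(a, b - z0 *\<^sub>C a) \<in> rshift Ahat z0" unfolding rinv_def by blast
  then obtain a' b' where ab: "(a', b') \<in> Ahat" "a = a'" "b - z0 *\<^sub>C a = b' - z0 *\<^sub>C a'"
    unfolding rshift_def by blast
  then have "b = b'" by simp
  then show "(a, b) \<in> Ahat" using ab by simp
qed

lemma Ahat_mem: "(Rh0 x, x + z0 *\<^sub>C Rh0 x) \<in> Ahat"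
  by (simp add: Ahat_char)

lemma Rh_adj: "Rh0 x \<bullet>\<bullet> y = x \<bullet>\<bullet> Rhc y"
proof -
  define q where "q = Qi0 (Gp (R0 x))"
  define s where "s = Qic (Gp (Rc y))"
  have "R0 (G0 q) \<bullet>\<bullet> y = G0 q \<bullet>\<bullet> Rc y" by (rule R0_adj)
  also have "... = cinner q (Gp (Rc y))" by (simp add: Gp(2))
  also have "... = cinner (Gp (R0 x)) s" by (simp add: q_def s_def Qic(4))
  also have "... = R0 x \<bullet>\<bullet> G0 s" by (simp add: Gp_left)
  also have "... = x \<bullet>\<bullet> Rc (G0 s)" by (rule R0_adj)
  finally have e: "R0 (G0 q) \<bullet>\<bullet> y = x \<bullet>\<bullet> Rc (G0 s)" .
  have "Rh0 x \<bullet>\<bullet> y = R0 x \<bullet>\<bullet> y - R0 (G0 q) \<bullet>\<bullet> y" by (simp add: Rh_def q_def ki_diff_left)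
  also have "... = R0 x \<bullet>\<bullet> y - x \<bullet>\<bullet> Rc (G0 s)" by (simp only: e)
  also have "... = x \<bullet>\<bullet> Rc y - x \<bullet>\<bullet> Rc (G0 s)" by (simp only: R0_adj)
  also have "... = x \<bullet>\<bullet> Rhc y" by (simp add: Rh_def s_def ki_diff_right)
  finally show ?thesis .
qed

lemma linrel_Ahat: "linrel Ahat"
  unfolding linrel_def
proof (intro conjI allI impI)
  note L = lin_rules[OF Rh0_lin]
  show "(0, 0) \<in> Ahat" by (simp add: Ahat_char L)
next
  fix x y u v assume "(x, y) \<in> Ahat" "(u, v) \<in> Ahat"
  then have "x = Rh0 (y - z0 *\<^sub>C x)" "u = Rh0 (v - z0 *\<^sub>C u)" by (simp_all add: Ahat_char)
  then have hx: "Rh0 (y - z0 *\<^sub>C x) = x" "Rh0 (v - z0 *\<^sub>C u) = u" by simp_all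
  have e: "(y + v) - z0 *\<^sub>C (x + u) = (y - z0 *\<^sub>C x) + (v - z0 *\<^sub>C u)"
    by (simp add: cscale_add_right algebra_simps)
  have "Rh0 ((y + v) - z0 *\<^sub>C (x + u)) = x + u"
    unfolding e lin_rules(1)[OF Rh0_lin] hx ..
  then show "(x + u, y + v) \<in> Ahat" unfolding Ahat_char by (rule sym)
next
  fix c x y assume "(x, y) \<in> Ahat"
  then have "x = Rh0 (y - z0 *\<^sub>C x)" by (simp add: Ahat_char)
  then have hx: "Rh0 (y - z0 *\<^sub>C x) = x" by simp
  have e: "c *\<^sub>C y - z0 *\<^sub>C (c *\<^sub>C x) = c *\<^sub>C (y - z0 *\<^sub>C x)"
    by (simp only: cscale_diff_right cscale_mult mult.commute)
  have "Rh0 (c *\<^sub>C y - z0 *\<^sub>C (c *\<^sub>C x)) = c *\<^sub>C x"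
    unfolding e lin_rules(3)[OF Rh0_lin] hx ..
  then show "(c *\<^sub>C x, c *\<^sub>C y) \<in> Ahat" unfolding Ahat_char by (rule sym)
qed

end



context setting
begin

lemma radj_Ahat: "radj J Ahat = Ahat"
proof (intro set_eqI iffI)
  fix p assume p: "p \<in> Ahat"
  obtain h k where hk: "p = (h, k)" by (cases p)
  have "k \<bullet>\<bullet> f = h \<bullet>\<bullet> g" if fg: "(f, g) \<in> Ahat" for f g
  proof -
    define a where "a = k - z0 *\<^sub>C h"
    define x where "x = g - z0 *\<^sub>C f"
    have ha: "h = Rh0 a" using p hk by (simp add: Ahat_char a_def)
    have fx: "f = Rh0 x" using fg by (simp add: Ahat_char x_def)
    define H where "H = h \<bullet>\<bullet> f"
    have k: "k = a + z0 *\<^sub>C h" by (simp add: a_def)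
    have g: "g = x + z0 *\<^sub>C f" by (simp add: x_def)
    have 1: "k \<bullet>\<bullet> f = a \<bullet>\<bullet> Rh0 x + z0 * H"
      by (simp add: k ki_add_left ki_scale_left H_def fx)
    have 2: "h \<bullet>\<bullet> g = a \<bullet>\<bullet> Rhc x + cnj z0 * H"
      by (simp add: g ki_add_right ki_scale_right H_def ha Rh_adj)
    have HH: "H = a \<bullet>\<bullet> Rhc (Rh0 x)" by (simp add: H_def ha fx Rh_adj)
    have "Rhc x = Rh0 x + (cnj z0 - z0) *\<^sub>C Rhc (Rh0 x)"
      using krein_c0[of x] by (simp add: algebra_simps)
    then have 3: "a \<bullet>\<bullet> Rhc x = a \<bullet>\<bullet> Rh0 x + (z0 - cnj z0) * H"
      by (simp add: ki_add_right ki_scale_right HH)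
    show ?thesis using 1 2 3 by (simp add: algebra_simps)
  qed
  then show "p \<in> radj J Ahat" unfolding radj_def hk by simp
next
  fix p assume p: "p \<in> radj J Ahat"
  obtain h k where hk: "p = (h, k)" by (cases p)
  have rel: "k \<bullet>\<bullet> f = h \<bullet>\<bullet> g" if "(f, g) \<in> Ahat" for f g
    using p that unfolding radj_def hk by blast
  define w where "w = k - cnj z0 *\<^sub>C h"
  have "Rhc w \<bullet>\<bullet> x = h \<bullet>\<bullet> x" for x
  proof -
    have r: "k \<bullet>\<bullet> Rh0 x = h \<bullet>\<bullet> x + cnj z0 * (h \<bullet>\<bullet> Rh0 x)"
      using rel[OF Ahat_mem[of x]] by (simp add: ki_add_right ki_scale_right)
    have "w \<bullet>\<bullet> Rh0 x = h \<bullet>\<bullet> x" using r by (simp add: w_def ki_diff_left ki_scale_left)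
    moreover have "w \<bullet>\<bullet> Rh0 x = Rhc w \<bullet>\<bullet> x"
      by (metis Rh_adj ki_conj)
    ultimately show ?thesis by simp
  qed
  then have hw: "Rhc w = h" by (rule ki_ext_left)
  have e: "k - z0 *\<^sub>C h = w + (cnj z0 - z0) *\<^sub>C Rhc w"
    unfolding hw by (simp add: w_def cscale_diff_left algebra_simps)
  have "Rh0 (k - z0 *\<^sub>C h) = Rh0 w + (cnj z0 - z0) *\<^sub>C Rh0 (Rhc w)"
    unfolding e by (simp add: lin_rules[OF Rh0_lin])
  also have "... = Rhc w"
    using krein_0c[of w] by (simp add: algebra_simps cscale_diff_left)
  finally have "h = Rh0 (k - z0 *\<^sub>C h)" using hw by simp
  then show "p \<in> Ahat" using hk by (simp add: Ahat_char)
qed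

lemma rres_eq:
  assumes zA: "z \<in> cres A" and zr: "z \<in> rres Ahat" and zQ: "binvertible (Q z)"
  shows "rresolvent Ahat z = Rh (cresolvent A z) (inv (Q z))"
proof -
  define Rz where "Rz = cresolvent A z"
  have rz: "resolv z Rz" using resolv_cres[OF zA] by (simp add: Rz_def)
  note bq = binv[OF zQ]
  obtain R where R: "bop R" "rinv (rshift Ahat z) = ograph R" using zr by (auto simp: rres_def)
  have the: "rresolvent Ahat z = R"
    unfolding rresolvent_def
  proof (rule the_equality)
    show "rinv (rshift Ahat z) = ograph R" by (rule R(2))
  next
    fix R' assume "rinv (rshift Ahat z) = ograph R'"
    then have eq: "ograph R' = ograph R" using R(2) by simp
    show "R' = R"
    proof
      fix x
      have "(x, R' x) \<in> ograph R'" by (auto simp: ograph_def)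
      then have "(x, R' x) \<in> ograph R" using eq by simp
      then show "R' x = R x" by (auto simp: ograph_def)
    qed
  qed
  have kr: "Rh Rz (inv (Q z)) x - Rh0 x = (z - z0) *\<^sub>C Rh Rz (inv (Q z)) (Rh0 x)" for x
  proof (rule krein[OF rz R0(1)])
    show "clinear (inv (Q z))" using bq(1) by (rule bop_clinear)
    show "\<And>h. inv (Q z) (Gp (Rz (G0 h))) = h" using bq(2) by (simp add: Q_apply Rz_def)
    show "\<And>k. Gp (R0 (G0 (Qi0 k))) = k" using Qi0(1) by (simp add: Q_apply)
  qed
  have lz: "clinear (Rh Rz (inv (Q z)))"
    using Rh_lin[of Rz "inv (Q z)"] rz bop_clinear[OF bq(1)] by (simp add: resolv_def)
  have "R y = Rh Rz (inv (Q z)) y" for y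
  proof -
    have "(y, R y) \<in> ograph R" by (auto simp: ograph_def)
    then have "(y, R y) \<in> rinv (rshift Ahat z)" using R(2) by simp
    then obtain a b where ab: "(a, b) \<in> Ahat" "y = b - z *\<^sub>C a" "R y = a"
      unfolding rinv_def rshift_def by blast
    define x where "x = b - z0 *\<^sub>C a"
    have ax: "a = Rh0 x" using ab(1) by (simp add: Ahat_char x_def)
    have y: "y = x + (z0 - z) *\<^sub>C a" by (simp add: ab(2) x_def cscale_diff_left)
    have "Rh Rz (inv (Q z)) y = Rh Rz (inv (Q z)) x + (z0 - z) *\<^sub>C Rh Rz (inv (Q z)) (Rh0 x)"
      by (simp add: y lin_rules[OF lz] ax)
    also have "... = Rh0 x" using kr[of x] by (simp add: algebra_simps cscale_diff_left)
    finally show ?thesis using ab(3) ax by simp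
  qed
  then show ?thesis using the by (auto simp: Rz_def)
qed

lemma padj_Gamhat: "padj J Gamhat = (\<lambda>k. - Qic (Gp (Rc k)))"
proof (rule padj_unique, intro allI)
  fix h k
  have "cinner h (- Qic (Gp (Rc k))) = - cinner (Qi0 h) (Gp (Rc k))"
    by (simp add: cinner_minus_right Qic(4))
  also have "... = - (G0 (Qi0 h) \<bullet>\<bullet> Rc k)" by (simp add: Gp(2))
  also have "... = - (R0 (G0 (Qi0 h)) \<bullet>\<bullet> k)" by (simp add: R0_adj)
  also have "... = Gamhat h \<bullet>\<bullet> k" by (simp add: Gamhat_def Gam_def ki_minus_left)
  finally show "cinner h (- Qic (Gp (Rc k))) = Gamhat h \<bullet>\<bullet> k" .
qed

lemma formula:
  assumes zA: "z \<in> cres A" and zr: "z \<in> rres Ahat" and zQ: "binvertible (Q z)"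
  shows "- inv (Q z) h = - inv (Q (cnj z0)) h
      + (z - cnj z0) *\<^sub>C padj J Gamhat (Gamhat h + (z - z0) *\<^sub>C rresolvent Ahat z (Gamhat h))"
proof -
  define Rz where "Rz = cresolvent A z"
  define Qiz where "Qiz = inv (Q z)"
  have rz: "resolv z Rz" using resolv_cres[OF zA] by (simp add: Rz_def)
  note bq = binv[OF zQ]
  have lQ: "clinear Qiz" using bq(1) bop_clinear by (simp add: Qiz_def)
  have lRz: "clinear Rz" using rz by (simp add: resolv_def)
  have qz1: "Qiz (Gp (Rz (G0 x))) = x" for x using bq(2) by (simp add: Q_apply Rz_def Qiz_def)
  have qz2: "Gp (Rz (G0 (Qiz x))) = x" for x using bq(3) by (simp add: Q_apply Rz_def Qiz_def)
  define Rhz where "Rhz = Rh Rz Qiz"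
  have lRhz: "clinear Rhz" unfolding Rhz_def using lRz lQ by (rule Rh_lin)
  have rr: "rresolvent Ahat z = Rhz" using rres_eq[OF zA zr zQ] by (simp add: Rhz_def Rz_def Qiz_def)
  note L = lin_rules[OF lRz] lin_rules[OF lQ] lin_rules[OF Gp_lin] lin_rules[OF G_lin]
    lin_rules[OF Rc_lin] lin_rules[OF Qic(3)] lin_rules[OF lRhz]
  define u where "u = Qi0 h"
  define v where "v = R0 (G0 u)"
  define q where "q = Qiz h"
  define m where "m = Rz (G0 q)"
  have Gh: "Gamhat h = - v" by (simp add: Gamhat_def Gam_def u_def v_def)
  have s1: "(z - z0) *\<^sub>C Rz v = Rz (G0 u) - v"
    using resolv_identity[OF rz R0(1), of "G0 u"] by (simp add: v_def)
  have s2: "Gp ((z - z0) *\<^sub>C Rz v) = Gp (Rz (G0 u)) - h"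
    unfolding s1 by (simp add: L v_def u_def Qi0(1) flip: Q_apply)
  have s3: "Qiz (Gp ((z - z0) *\<^sub>C Rz v)) = u - q"
    unfolding s2 by (simp only: L qz1 q_def)
  have "(z - z0) *\<^sub>C Rhz v = (z - z0) *\<^sub>C Rz v - (z - z0) *\<^sub>C Rz (G0 (Qiz (Gp (Rz v))))"
    by (simp add: Rhz_def Rh_def cscale_diff_right)
  also have "(z - z0) *\<^sub>C Rz (G0 (Qiz (Gp (Rz v)))) = Rz (G0 (Qiz (Gp ((z - z0) *\<^sub>C Rz v))))"
    by (simp only: L)
  also have "... = Rz (G0 u) - m" unfolding s3 by (simp only: L m_def)
  finally have s4: "(z - z0) *\<^sub>C Rhz v = m - v" by (simp add: s1)
  have inner: "Gamhat h + (z - z0) *\<^sub>C Rhz (Gamhat h) = - m"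
    by (simp add: Gh L s4 cscale_minus_right)
  have s5: "(z - cnj z0) *\<^sub>C Rc m = Rz (G0 q) - Rc (G0 q)"
    using resolv_identity'[OF rz Rc_resolv, of "G0 q"] by (simp add: m_def)
  have s6: "Gp ((z - cnj z0) *\<^sub>C Rc m) = h - Qc q"
    unfolding s5 by (simp only: L qz2 q_def Q_apply)
  have s7: "(z - cnj z0) *\<^sub>C Qic (Gp (Rc m)) = Qic h - q"
  proof -
    have "(z - cnj z0) *\<^sub>C Qic (Gp (Rc m)) = Qic (Gp ((z - cnj z0) *\<^sub>C Rc m))" by (simp only: L)
    also have "... = Qic h - q" unfolding s6 by (simp only: L Qic(2))
    finally show ?thesis .
  qed
  have "padj J Gamhat (- m) = Qic (Gp (Rc m))" by (simp add: padj_Gamhat L)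
  then have "(z - cnj z0) *\<^sub>C padj J Gamhat (Gamhat h + (z - z0) *\<^sub>C rresolvent Ahat z (Gamhat h))
      = Qic h - q" by (simp add: rr inner s7)
  then show ?thesis by (simp add: q_def Qiz_def)
qed

lemma ker_char: "rker (rinv (rshift Ahat z0)) = {x. Rh0 x = 0}"
  by (auto simp: Ahat_eq rker_def ograph_def)

lemma mulpart_char: "mulpart Ahat = {x. Rh0 x = 0}"
  by (auto simp: mulpart_def Ahat_char)

lemma R0_inj: "R0 a = R0 b \<Longrightarrow> a = b"
  by (metis R0(1) resolv_def)

lemma ker_range: "{x. Rh0 x = 0} = range G0"
proof (intro set_eqI iffI)
  fix x assume "x \<in> {x. Rh0 x = 0}"
  then have "R0 x = R0 (G0 (Qi0 (Gp (R0 x))))" by (simp add: Rh_def)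
  then have "x = G0 (Qi0 (Gp (R0 x)))" by (rule R0_inj)
  then show "x \<in> range G0" by (metis rangeI)
next
  fix x assume "x \<in> range G0"
  then obtain h where "x = G0 h" by blast
  then show "x \<in> {x. Rh0 x = 0}" using Qi0(2)[of h] by (simp add: Rh_def Q_apply)
qed

lemma range_P: "range P = range G0"
proof (intro set_eqI iffI)
  fix x assume "x \<in> range P" then show "x \<in> range G0" by (auto simp: P_eq)
next
  fix x assume "x \<in> range G0"
  then obtain h where "x = G0 h" by blast
  then have "x = P x" by (simp add: P_G)
  then show "x \<in> range P" by (metis rangeI)
qed

lemma main: "linrel Ahat \<and> radj J Ahat = Ahat
    \<and> (\<forall>z. z \<in> cres A \<and> z \<in> rres Ahat \<and> binvertible (Q z) \<longrightarrow>
          (\<forall>h. - inv (Q z) h =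
                 - inv (Q (cnj z0)) h
                 + (z - cnj z0) *\<^sub>C padj J Gamhat
                     (Gamhat h + (z - z0) *\<^sub>C rresolvent Ahat z (Gamhat h))))
    \<and> mulpart Ahat = rker (rinv (rshift Ahat z0))
    \<and> rker (rinv (rshift Ahat z0)) = range P
    \<and> range P = range G0
    \<and> ((\<exists>h::'h. h \<noteq> 0) \<longrightarrow> mulpart Ahat \<noteq> {0})"
proof (intro conjI allI impI)
  show "linrel Ahat" by (rule linrel_Ahat)
  show "radj J Ahat = Ahat" by (rule radj_Ahat)
  fix z h assume "z \<in> cres A \<and> z \<in> rres Ahat \<and> binvertible (Q z)"
  then show "- inv (Q z) h = - inv (Q (cnj z0)) h
                 + (z - cnj z0) *\<^sub>C padj J Gamhat
                     (Gamhat h + (z - z0) *\<^sub>C rresolvent Ahat z (Gamhat h))"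
    using formula by blast
next
  show "mulpart Ahat = rker (rinv (rshift Ahat z0))" by (simp add: ker_char mulpart_char)
  show "rker (rinv (rshift Ahat z0)) = range P" by (simp add: ker_char ker_range range_P)
  show "range P = range G0" by (rule range_P)
next
  assume "\<exists>h::'h. h \<noteq> 0"
  then obtain h :: 'h where h: "h \<noteq> 0" by blast
  have "G0 h \<noteq> 0" using h G_inj0 by blast
  moreover have "G0 h \<in> mulpart Ahat" by (simp add: mulpart_char ker_range)
  ultimately show "mulpart Ahat \<noteq> {0}" by blast
qed

end

theorem corollary2:
  fixes J :: "'k::chilbert \<Rightarrow> 'k"
    and A P At :: "'k \<Rightarrow> 'k"
    and G0 Gam Gamhat :: "'h::chilbert \<Rightarrow> 'k"
    and Q :: "complex \<Rightarrow> 'h \<Rightarrow> 'h"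
    and z0 :: complex
    and Ahat :: "('k \<times> 'k) set"
  assumes K: "pontryagin J"
    and A_bounded: "bop A"
    and A_selfadj: "\<forall>x y. kinner J (A x) y = kinner J x (A y)"
    and G0_bounded: "bop G0"
    and G0_inv: "binvertible (padj J G0 \<circ> G0)"
    and Q_def: "\<forall>z. Q z = padj J G0 \<circ> cresolvent A z \<circ> G0"
    and P_def: "P = G0 \<circ> inv (padj J G0 \<circ> G0) \<circ> padj J G0"
    and At_def: "At = (\<lambda>x. x - P x) \<circ> A \<circ> (\<lambda>x. x - P x)"
    and z0_A: "z0 \<in> cres A"
    and z0_At: "z0 \<in> res_on (range (\<lambda>x. x - P x)) At"
    and z0_upper: "0 < Im z0"
    and Gam_def: "Gam = cresolvent A z0 \<circ> G0"
    and Gamhat_def: "Gamhat = (\<lambda>h. - Gam (inv (Q z0) h))"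
    and Ahat_def: "rinv (rshift Ahat z0) =
       ograph (\<lambda>x. cresolvent A z0 x
                  - cresolvent A z0 (G0 (inv (Q z0) (padj J G0 (cresolvent A z0 x)))))"
  shows "linrel Ahat \<and> radj J Ahat = Ahat
    \<and> (\<forall>z. z \<in> cres A \<and> z \<in> rres Ahat \<and> binvertible (Q z) \<longrightarrow>
          (\<forall>h. - inv (Q z) h =
                 - inv (Q (cnj z0)) h
                 + (z - cnj z0) *\<^sub>C padj J Gamhat
                     (Gamhat h + (z - z0) *\<^sub>C rresolvent Ahat z (Gamhat h))))
    \<and> mulpart Ahat = rker (rinv (rshift Ahat z0))
    \<and> rker (rinv (rshift Ahat z0)) = range P
    \<and> range P = range G0
    \<and> ((\<exists>h::'h. h \<noteq> 0) \<longrightarrow> mulpart Ahat \<noteq> {0})"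
proof -
  interpret setting J A P At G0 Gam Gamhat Q z0 Ahat
    by (rule setting.intro) (fact assms)+
  show ?thesis by (rule main)
qed

end
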